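(* Let $H=(V,E)$ be a (possibly infinite) hypergraph and let $(V_1,E_1)$ and $(V_2,E_2)$ be subhypergraphs of $H$ (so each hyperedge in $E_i$ is a subset of $V_i$) with $V_1\cup V_2=V$, $V_1\cap V_2=\{v\}$ for a single vertex $v$, and $E=E_1\cup E_2$. In the maker–breaker game in which maker moves first, maker can win on $(V,E)$ if and only if at least one of the following holds: (1) maker can win the maker–breaker game on $(V_1,E_1)$; (2) maker can win the maker–breaker game on $(V_2,E_2)$; (3) for both $i=1$ and $i=2$, maker can win the game on $(V_i,E_i)$ started from the position in which $v$ is already colored with maker's color and maker makes the next move.
   Context: The maker–breaker game on a hypergraph $(V,E)$: two players, maker and breaker, alternately color one previously uncolored vertex with their own color (here maker moves first unless a different starting position is specified). Maker wins if at some finite stage all vertices of some hyperedge are maker-colored; breaker wins otherwise. "Maker can win" means maker has a strategy guaranteeing a win regardless of breaker's play. *)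

theory Defs
  imports Main
begin

(* A position is given by an initial set M0 of maker-coloured vertices,
   an initial set B0 of breaker-coloured vertices, and the history h of
   moves made since then (a list of vertices); maker moves first from the
   initial position, so entries of h at even indices are maker's moves and
   entries at odd indices are breaker's moves. *)

definition free_vertices :: "'a set \<Rightarrow> 'a set \<Rightarrow> 'a set \<Rightarrow> 'a list \<Rightarrow> 'a set" where
  "free_vertices V M0 B0 h = V - M0 - B0 - set h"

definition maker_vertices :: "'a set \<Rightarrow> 'a list \<Rightarrow> 'a set" where
  "maker_vertices M0 h = M0 \<union> {h ! i | i. i < length h \<and> even i}"

definition maker_won :: "'a set set \<Rightarrow> 'a set \<Rightarrow> 'a list \<Rightarrow> bool" where
  "maker_won E M0 h \<longleftrightarrow> (\<exists>e\<in>E. e \<subseteq> maker_vertices M0 h)"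

definition legal_strategy :: "'a set \<Rightarrow> 'a set \<Rightarrow> 'a set \<Rightarrow> ('a list \<Rightarrow> 'a) \<Rightarrow> bool" where
  "legal_strategy V M0 B0 s \<longleftrightarrow>
     (\<forall>h. free_vertices V M0 B0 h \<noteq> {} \<longrightarrow> s h \<in> free_vertices V M0 B0 h)"

primrec play :: "'a set \<Rightarrow> 'a set set \<Rightarrow> 'a set \<Rightarrow> 'a set \<Rightarrow>
    ('a list \<Rightarrow> 'a) \<Rightarrow> ('a list \<Rightarrow> 'a) \<Rightarrow> nat \<Rightarrow> 'a list" where
  "play V E M0 B0 \<sigma> \<tau> 0 = []"
| "play V E M0 B0 \<sigma> \<tau> (Suc n) =
     (let h = play V E M0 B0 \<sigma> \<tau> n in
      if maker_won E M0 h \<or> free_vertices V M0 B0 h = {} then h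
      else h @ [if even (length h) then \<sigma> h else \<tau> h])"

definition maker_can_win_from :: "'a set \<Rightarrow> 'a set set \<Rightarrow> 'a set \<Rightarrow> 'a set \<Rightarrow> bool" where
  "maker_can_win_from V E M0 B0 \<longleftrightarrow>
     (\<exists>\<sigma>. legal_strategy V M0 B0 \<sigma> \<and>
        (\<forall>\<tau>. legal_strategy V M0 B0 \<tau> \<longrightarrow>
           (\<exists>n. maker_won E M0 (play V E M0 B0 \<sigma> \<tau> n))))"

definition maker_can_win :: "'a set \<Rightarrow> 'a set set \<Rightarrow> bool" where
  "maker_can_win V E \<longleftrightarrow> maker_can_win_from V E {} {}"

end

theory Submission
  imports Defs
begin


definition won :: "'a set set \<Rightarrow> 'a set \<Rightarrow> bool" where
  "won E M \<longleftrightarrow> (\<exists>e\<in>E. e \<subseteq> M)"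

inductive mw :: "'a set set \<Rightarrow> 'a set \<Rightarrow> 'a set \<Rightarrow> bool" for E where
  W_won: "won E M \<Longrightarrow> mw E M F"
| W_fin: "x \<in> F \<Longrightarrow> won E (insert x M) \<Longrightarrow> mw E M F"
| W_step: "x \<in> F \<Longrightarrow> F - {x} \<noteq> {} \<Longrightarrow> (\<forall>y\<in>F - {x}. mw E (insert x M) (F - {x, y})) \<Longrightarrow> mw E M F"
monos Ball_def

lemma won_mono: "won E M \<Longrightarrow> E \<subseteq> E' \<Longrightarrow> M \<subseteq> M' \<Longrightarrow> won E' M'"
  unfolding won_def by blast

lemma mw_won_all: "mw E M F \<Longrightarrow> won E (M \<union> F)"
proof (induction rule: mw.induct)
  case (W_won M F) then show ?case unfolding won_def by blast
next
  case (W_fin x F M) then show ?case unfolding won_def by blast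
next
  case (W_step x F M)
  then obtain y where y: "y \<in> F - {x}" by blast
  with W_step have "won E (insert x M \<union> (F - {x,y}))" by blast
  then show ?case by (rule won_mono) (use W_step(1) in auto)
qed

lemma mw_lift_aux:
  assumes "mw E1 M F" "E1 \<subseteq> E"
  shows "\<forall>M' F'. M \<subseteq> M' \<longrightarrow> F \<subseteq> M' \<union> F' \<longrightarrow> mw E M' F'"
  using assms(1)
proof (induction rule: mw.induct)
  case (W_won M F)
  have "won E M'" if "M \<subseteq> M'" for M' using W_won(1) assms(2) that by (rule won_mono)
  then show ?case by (blast intro: mw.W_won)
next
  case (W_fin x F M)
  show ?case
  proof (intro allI impI)
    fix M' F' assume MM: "M \<subseteq> M'" and FF: "F \<subseteq> M' \<union> F'"
    show "mw E M' F'"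
    proof (cases "x \<in> M'")
      case True
      have "won E M'" using W_fin(2) assms(2) by (rule won_mono) (use MM True in auto)
      then show ?thesis by (rule mw.W_won)
    next
      case False
      then have "x \<in> F'" using W_fin(1) FF by auto
      moreover have "won E (insert x M')" using W_fin(2) assms(2) by (rule won_mono) (use MM in auto)
      ultimately show ?thesis by (rule mw.W_fin)
    qed
  qed
next
  case (W_step x F M)
  note W_step
  have hW: "mw E1 M F" using W_step(1,2) W_step(3) by (intro mw.W_step[of x]) auto
  have wonMF: "won E1 (M \<union> F)" using hW by (rule mw_won_all)
  show ?case
  proof (intro allI impI)
    fix M' F' assume MM: "M \<subseteq> M'" and FF: "F \<subseteq> M' \<union> F'"
    have key: "mw E (insert z M') (F' - {z,y'})"
      if z: "z \<in> F'" "x \<in> insert z M'" and y': "y' \<in> F' - {z}" for z y'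
    proof -
      obtain y where y: "y \<in> F - {x}" "F - {x,y} \<subseteq> insert z M' \<union> (F' - {z,y'})"
      proof (cases "y' \<in> F - {x}")
        case True then show ?thesis using that[of y'] FF by auto
      next
        case False
        obtain y where "y \<in> F - {x}" using W_step(2) by blast
        then show ?thesis using that[of y] FF False by auto
      qed
      have IHy: "\<forall>M'' F''. insert x M \<subseteq> M'' \<longrightarrow> F - {x,y} \<subseteq> M'' \<union> F'' \<longrightarrow> mw E M'' F''"
        using bspec[OF W_step(3) y(1)] by (rule conjunct2)
      have sub: "insert x M \<subseteq> insert z M'" using MM z(2) by auto
      show ?thesis using IHy sub y(2) by blast
    qed
    show "mw E M' F'"
    proof (cases "x \<in> F'")
      case xF: True
      show ?thesis
      proof (cases "F' - {x} = {}")
        case True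
        have "won E (insert x M')" using wonMF assms(2) by (rule won_mono) (use MM FF True in auto)
        then show ?thesis by (rule mw.W_fin[OF xF])
      next
        case False
        show ?thesis
        proof (rule mw.W_step[OF xF False], rule ballI)
          fix y' assume "y' \<in> F' - {x}"
          then show "mw E (insert x M') (F' - {x, y'})" by (rule key[OF xF insertI1])
        qed
      qed
    next
      case False
      then have xM: "x \<in> M'" using W_step(1) FF by auto
      show ?thesis
      proof (cases "F' = {}")
        case True
        have "won E M'" using wonMF assms(2) by (rule won_mono) (use MM FF True in auto)
        then show ?thesis by (rule mw.W_won)
      next
        case False
        then obtain z where zF: "z \<in> F'" by auto
        show ?thesis
        proof (cases "F' - {z} = {}")
          case True
          have "won E (insert z M')" using wonMF assms(2) by (rule won_mono) (use MM FF True in auto)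
          then show ?thesis by (rule mw.W_fin[OF zF])
        next
          case False
          show ?thesis
          proof (rule mw.W_step[OF zF False], rule ballI)
            fix y' assume "y' \<in> F' - {z}"
            then show "mw E (insert z M') (F' - {z, y'})" by (rule key[OF zF insertI2[OF xM]])
          qed
        qed
      qed
    qed
  qed
qed

lemma mw_lift: "mw E1 M F \<Longrightarrow> E1 \<subseteq> E \<Longrightarrow> M \<subseteq> M' \<Longrightarrow> F \<subseteq> M' \<union> F' \<Longrightarrow> mw E M' F'"
  using mw_lift_aux by blast



lemma not_mw1: "\<not> mw E M F \<Longrightarrow> \<not> won E M"
  using mw.W_won by blast
lemma not_mw2: "\<not> mw E M F \<Longrightarrow> x \<in> F \<Longrightarrow> \<not> won E (insert x M)"
  using mw.W_fin[where x=x and F=F and M=M and E=E] by blast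
lemma not_mw3: "\<not> mw E M F \<Longrightarrow> x \<in> F \<Longrightarrow> F - {x} \<noteq> {} \<Longrightarrow> \<exists>y\<in>F - {x}. \<not> mw E (insert x M) (F - {x,y})"
  using mw.W_step[where x=x and F=F and M=M and E=E] by blast

lemma won_split:
  assumes E1: "\<forall>e\<in>E1. e \<subseteq> V1" and E2: "\<forall>e\<in>E2. e \<subseteq> V2" and EE: "E = E1 \<union> E2"
  shows "won E M \<Longrightarrow> won E1 (M \<inter> V1) \<or> won E2 (M \<inter> V2)"
proof -
  assume "won E M"
  then obtain e where e: "e \<in> E" "e \<subseteq> M" unfolding won_def by blast
  show ?thesis
  proof (cases "e \<in> E1")
    case True
    then have "e \<subseteq> M \<inter> V1" using e E1 by blast
    then show ?thesis using True unfolding won_def by blast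
  next
    case False
    then have "e \<in> E2" using e EE by blast
    then have "e \<subseteq> M \<inter> V2" using e E2 by blast
    then show ?thesis using \<open>e \<in> E2\<close> unfolding won_def by blast
  qed
qed

lemma mw_split_aux:
  assumes E1: "\<forall>e\<in>E1. e \<subseteq> V1" and E2: "\<forall>e\<in>E2. e \<subseteq> V2" and I: "V1 \<inter> V2 = {v}"
    and EE: "E = E1 \<union> E2"
    and "mw E M F"
  shows "F \<subseteq> V1 \<union> V2 \<longrightarrow> mw E1 (M \<inter> V1 \<union> {v}) (F \<inter> V1 - {v}) \<or> mw E2 (M \<inter> V2) (F \<inter> V2)"
  using assms(5)
proof (induction rule: mw.induct)
  case (W_won M F)
  then have "won E1 (M \<inter> V1) \<or> won E2 (M \<inter> V2)" using won_split[OF E1 E2 EE] by blast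
  then show ?case
  proof
    assume "won E1 (M \<inter> V1)"
    then have "won E1 (M \<inter> V1 \<union> {v})" by (rule won_mono) auto
    then show ?case by (simp add: mw.W_won)
  next
    assume "won E2 (M \<inter> V2)"
    then show ?case by (simp add: mw.W_won)
  qed
next
  case (W_fin x F M)
  show ?case
  proof
    assume FV: "F \<subseteq> V1 \<union> V2"
    have "won E1 (insert x M \<inter> V1) \<or> won E2 (insert x M \<inter> V2)"
      using W_fin(2) won_split[OF E1 E2 EE] by blast
    then show "mw E1 (M \<inter> V1 \<union> {v}) (F \<inter> V1 - {v}) \<or> mw E2 (M \<inter> V2) (F \<inter> V2)"
    proof
      assume w: "won E1 (insert x M \<inter> V1)"
      show ?thesis
      proof (cases "x \<in> V1 - {v}")
        case True
        then have "x \<in> F \<inter> V1 - {v}" using W_fin(1) by auto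
        moreover have "won E1 (insert x (M \<inter> V1 \<union> {v}))" using w by (rule won_mono) auto
        ultimately have "mw E1 (M \<inter> V1 \<union> {v}) (F \<inter> V1 - {v})" by (rule mw.W_fin)
        then show ?thesis by blast
      next
        case False
        have "won E1 (M \<inter> V1 \<union> {v})" using w by (rule won_mono[OF _ order_refl]) (use False in auto)
        then have "mw E1 (M \<inter> V1 \<union> {v}) (F \<inter> V1 - {v})" by (rule mw.W_won)
        then show ?thesis by blast
      qed
    next
      assume w: "won E2 (insert x M \<inter> V2)"
      show ?thesis
      proof (cases "x \<in> V2")
        case True
        then have "x \<in> F \<inter> V2" using W_fin(1) by auto
        moreover have "won E2 (insert x (M \<inter> V2))" using w by (rule won_mono) auto
        ultimately have "mw E2 (M \<inter> V2) (F \<inter> V2)" by (rule mw.W_fin)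
        then show ?thesis by blast
      next
        case False
        have "won E2 (M \<inter> V2)" using w by (rule won_mono[OF _ order_refl]) (use False in auto)
        then have "mw E2 (M \<inter> V2) (F \<inter> V2)" by (rule mw.W_won)
        then show ?thesis by blast
      qed
    qed
  qed
next
  case (W_step x F M)
  define M1 where "M1 = M \<inter> V1 \<union> {v}"
  define F1 where "F1 = F \<inter> V1 - {v}"
  define M2 where "M2 = M \<inter> V2"
  define F2 where "F2 = F \<inter> V2"
  have IH: "mw E1 (insert x M \<inter> V1 \<union> {v}) ((F - {x,y}) \<inter> V1 - {v}) \<or>
            mw E2 (insert x M \<inter> V2) ((F - {x,y}) \<inter> V2)"
    if "y \<in> F - {x}" "F \<subseteq> V1 \<union> V2" for y
    using W_step(3) that by blast
  show ?case
  proof (intro impI)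
    assume FV: "F \<subseteq> V1 \<union> V2"
    show "mw E1 (M \<inter> V1 \<union> {v}) (F \<inter> V1 - {v}) \<or> mw E2 (M \<inter> V2) (F \<inter> V2)" unfolding M1_def[symmetric] F1_def[symmetric] M2_def[symmetric] F2_def[symmetric]
    proof (rule ccontr)
      assume "\<not> (mw E1 M1 F1 \<or> mw E2 M2 F2)"
      then have n1: "\<not> mw E1 M1 F1" and n2: "\<not> mw E2 M2 F2" by auto
      have xV: "x \<in> V1 \<union> V2" using FV W_step(1) by auto
      show False
      proof (cases "x \<in> V2")
        case False
        then have xF1: "x \<in> F1" and xv: "x \<noteq> v" using xV W_step(1) I unfolding F1_def by auto
        have eqM1: "insert x M \<inter> V1 \<union> {v} = insert x M1" using xV False unfolding M1_def by auto
        have eqM2: "insert x M \<inter> V2 = M2" using False unfolding M2_def by auto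
        have eqF1: "(F - {x,y}) \<inter> V1 - {v} = F1 - {x,y}" for y unfolding F1_def by auto
        show False
        proof (cases "F1 - {x} = {}")
          case False
          then obtain y1 where y1: "y1 \<in> F1 - {x}" "\<not> mw E1 (insert x M1) (F1 - {x,y1})"
            using not_mw3[OF n1 xF1] by blast
          have y1V2: "y1 \<notin> V2" using y1(1) I unfolding F1_def by auto
          have eqF2: "(F - {x,y1}) \<inter> V2 = F2" using y1V2 \<open>x \<notin> V2\<close> unfolding F2_def by auto
          have "y1 \<in> F - {x}" using y1(1) unfolding F1_def by auto
          from IH[OF this FV] y1(2) n2 show False unfolding eqM1 eqM2 eqF1 eqF2 by blast
        next
          case True
          obtain y where y: "y \<in> F - {x}" using W_step(2) by blast
          from IH[OF y FV] show False
          proof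
            assume "mw E1 (insert x M \<inter> V1 \<union> {v}) ((F - {x, y}) \<inter> V1 - {v})"
            moreover have "F1 - {x,y} = {}" using True by auto
            ultimately have "mw E1 (insert x M1) {}" unfolding eqM1 eqF1 by simp
            then have "won E1 (insert x M1)" using mw_won_all by fastforce
            then show False using not_mw2[OF n1 xF1] by blast
          next
            assume "mw E2 (insert x M \<inter> V2) ((F - {x, y}) \<inter> V2)"
            then have "mw E2 M2 F2" unfolding eqM2 by (rule mw_lift) (auto simp: F2_def)
            then show False using n2 by blast
          qed
        qed
      next
        case True
        then have xF2: "x \<in> F2" using W_step(1) unfolding F2_def by auto
        have eqM1: "insert x M \<inter> V1 \<union> {v} = M1" using True I unfolding M1_def by auto
        have eqM2: "insert x M \<inter> V2 = insert x M2" using True unfolding M2_def by auto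
        have eqF2: "(F - {x,y}) \<inter> V2 = F2 - {x,y}" for y unfolding F2_def by auto
        show False
        proof (cases "F2 - {x} = {}")
          case False
          then obtain y2 where y2: "y2 \<in> F2 - {x}" "\<not> mw E2 (insert x M2) (F2 - {x,y2})"
            using not_mw3[OF n2 xF2] by blast
          have eqF1: "(F - {x,y2}) \<inter> V1 - {v} = F1" using y2(1) True I unfolding F1_def F2_def by auto
          have "y2 \<in> F - {x}" using y2(1) unfolding F2_def by auto
          from IH[OF this FV] y2(2) n1 show False unfolding eqM1 eqM2 eqF1 eqF2 by blast
        next
          case True
          obtain y where y: "y \<in> F - {x}" using W_step(2) by blast
          from IH[OF y FV] show False
          proof
            assume "mw E2 (insert x M \<inter> V2) ((F - {x, y}) \<inter> V2)"
            moreover have "F2 - {x,y} = {}" using True by auto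
            ultimately have "mw E2 (insert x M2) {}" unfolding eqM2 eqF2 by simp
            then have "won E2 (insert x M2)" using mw_won_all by fastforce
            then show False using not_mw2[OF n2 xF2] by blast
          next
            assume "mw E1 (insert x M \<inter> V1 \<union> {v}) ((F - {x, y}) \<inter> V1 - {v})"
            then have "mw E1 M1 F1" unfolding eqM1 by (rule mw_lift) (auto simp: F1_def)
            then show False using n1 by blast
          qed
        qed
      qed
    qed
  qed
qed



lemma mv_nil: "maker_vertices M0 [] = M0" by (simp add: maker_vertices_def)

lemma mv_snoc: "maker_vertices M0 (h @ [a]) =
  (if even (length h) then insert a (maker_vertices M0 h) else maker_vertices M0 h)"
proof -
  have "{(h @ [a]) ! i |i. i < length (h @ [a]) \<and> even i} =
        {h ! i |i. i < length h \<and> even i} \<union> (if even (length h) then {a} else {})"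
  proof (intro equalityI subsetI)
    fix u assume "u \<in> {(h @ [a]) ! i |i. i < length (h @ [a]) \<and> even i}"
    then obtain i where i: "u = (h @ [a]) ! i" "i < length h + 1" "even i" by auto
    show "u \<in> {h ! i |i. i < length h \<and> even i} \<union> (if even (length h) then {a} else {})"
    proof (cases "i < length h")
      case True then show ?thesis using i by (auto simp: nth_append)
    next
      case False then have "i = length h" using i by auto
      then show ?thesis using i by auto
    qed
  next
    fix u assume u: "u \<in> {h ! i |i. i < length h \<and> even i} \<union> (if even (length h) then {a} else {})"
    show "u \<in> {(h @ [a]) ! i |i. i < length (h @ [a]) \<and> even i}"
    proof (cases "u \<in> {h ! i |i. i < length h \<and> even i}")
      case True
      then obtain i where "u = h ! i" "i < length h" "even i" by auto
      then show ?thesis by (auto simp: nth_append intro!: exI[of _ i])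
    next
      case False
      then have "even (length h)" "u = a" using u by (auto split: if_splits)
      then show ?thesis by (auto intro!: exI[of _ "length h"])
    qed
  qed
  then show ?thesis by (auto simp: maker_vertices_def)
qed

lemma mv_single: "maker_vertices M0 [a] = insert a M0"
  using mv_snoc[of M0 "[]" a] by (simp add: mv_nil)

lemma mv_cons2: "maker_vertices M0 (x # y # h) = maker_vertices (insert x M0) h"
proof -
  have "{(x # y # h) ! i |i. i < length (x # y # h) \<and> even i} = insert x {h ! i |i. i < length h \<and> even i}"
  proof (intro equalityI subsetI)
    fix u assume "u \<in> {(x # y # h) ! i |i. i < length (x # y # h) \<and> even i}"
    then obtain i where i: "u = (x # y # h) ! i" "i < length h + 2" "even i" by auto
    have "i = 0 \<or> i = 1 \<or> (\<exists>j. i = Suc (Suc j))" by presburger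
    then show "u \<in> insert x {h ! i |i. i < length h \<and> even i}"
    proof (elim disjE exE)
      assume "i = 0" then show ?thesis using i by simp
    next
      assume "i = 1" then show ?thesis using i by simp
    next
      fix j assume j: "i = Suc (Suc j)"
      then have "u = h ! j" "j < length h" "even j" using i by auto
      then show ?thesis by blast
    qed
  next
    fix u assume u: "u \<in> insert x {h ! i |i. i < length h \<and> even i}"
    show "u \<in> {(x # y # h) ! i |i. i < length (x # y # h) \<and> even i}"
    proof (cases "u = x")
      case True then show ?thesis by (auto intro!: exI[of _ 0])
    next
      case False
      then obtain j where "u = h ! j" "j < length h" "even j" using u by auto
      then show ?thesis by (auto intro!: exI[of _ "Suc (Suc j)"])
    qed
  qed
  then show ?thesis by (auto simp: maker_vertices_def)
qed

lemma fr_nil: "free_vertices V M0 B0 [] = V - M0 - B0" by (simp add: free_vertices_def)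
lemma fr_snoc: "free_vertices V M0 B0 (h @ [a]) = free_vertices V M0 B0 h - {a}"
  by (auto simp: free_vertices_def)
lemma fr_cons2: "free_vertices V M0 B0 (x # y # h) = free_vertices V (insert x M0) (insert y B0) h"
  by (auto simp: free_vertices_def)
lemma mwon: "maker_won E M0 h \<longleftrightarrow> won E (maker_vertices M0 h)"
  by (simp add: maker_won_def won_def)

lemma Diff2: "A - {x} - {y} = A - {x, y}" by auto



lemma mw_imp_win: "mw E M F \<Longrightarrow> \<forall>V B0. F = V - M - B0 \<longrightarrow> maker_can_win_from V E M B0"
proof (induction rule: mw.induct)
  case (W_won M F)
  show ?case
  proof (intro allI impI)
    fix V B0
    let ?\<sigma> = "\<lambda>h. SOME z. z \<in> free_vertices V M B0 h"
    have "legal_strategy V M B0 ?\<sigma>" by (simp add: legal_strategy_def some_in_eq)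
    moreover have "maker_won E M (play V E M B0 ?\<sigma> \<tau> 0)" for \<tau>
      using W_won by (simp add: mwon mv_nil)
    ultimately show "maker_can_win_from V E M B0" unfolding maker_can_win_from_def by blast
  qed
next
  case (W_fin x F M)
  show ?case
  proof (intro allI impI)
    fix V B0 assume FV: "F = V - M - B0"
    define \<sigma> where "\<sigma> = (\<lambda>h. if h = [] then x else SOME z. z \<in> free_vertices V M B0 h)"
    have leg: "legal_strategy V M B0 \<sigma>"
      using W_fin(1) FV by (auto simp: legal_strategy_def \<sigma>_def some_in_eq fr_nil)
    have win: "\<exists>n. maker_won E M (play V E M B0 \<sigma> \<tau> n)" for \<tau>
    proof (cases "maker_won E M []")
      case True then show ?thesis by (intro exI[of _ 0]) simp
    next
      case False
      have "free_vertices V M B0 [] \<noteq> {}" using W_fin(1) FV by (auto simp: fr_nil)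
      then have "play V E M B0 \<sigma> \<tau> (Suc 0) = [x]" using False by (simp add: \<sigma>_def)
      moreover have "maker_won E M [x]" using W_fin(2) by (simp add: mwon mv_single)
      ultimately show ?thesis by metis
    qed
    show "maker_can_win_from V E M B0" unfolding maker_can_win_from_def using leg win by blast
  qed
next
  case (W_step x F M)
  show ?case
  proof (intro allI impI)
    fix V B0 assume FV: "F = V - M - B0"
    have cw: "maker_can_win_from V E (insert x M) (insert y B0)" if "y \<in> F - {x}" for y
    proof -
      have "F - {x,y} = V - insert x M - insert y B0" using FV by auto
      then show ?thesis using W_step(3) that by blast
    qed
    define S where "S y = (SOME \<sigma>. legal_strategy V (insert x M) (insert y B0) \<sigma> \<and>
        (\<forall>\<tau>. legal_strategy V (insert x M) (insert y B0) \<tau> \<longrightarrow>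
           (\<exists>n. maker_won E (insert x M) (play V E (insert x M) (insert y B0) \<sigma> \<tau> n))))" for y
    have S: "legal_strategy V (insert x M) (insert y B0) (S y) \<and>
        (\<forall>\<tau>. legal_strategy V (insert x M) (insert y B0) \<tau> \<longrightarrow>
           (\<exists>n. maker_won E (insert x M) (play V E (insert x M) (insert y B0) (S y) \<tau> n)))"
      if "y \<in> F - {x}" for y
      using cw[OF that] unfolding maker_can_win_from_def S_def by (rule someI_ex)
    define d where "d = (\<lambda>h. SOME z. z \<in> free_vertices V M B0 h)"
    define \<sigma> where "\<sigma> = (\<lambda>h. case h of [] \<Rightarrow> x | [a] \<Rightarrow> d h
        | a # b # rest \<Rightarrow> (if a = x \<and> b \<in> F - {x} then S b rest else d h))"
    have leg: "legal_strategy V M B0 \<sigma>"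
      unfolding legal_strategy_def
    proof (intro allI impI)
      fix h assume ne: "free_vertices V M B0 h \<noteq> {}"
      have dh: "d h \<in> free_vertices V M B0 h" using ne by (simp add: d_def some_in_eq)
      show "\<sigma> h \<in> free_vertices V M B0 h"
      proof (cases h rule: remdups_adj.cases)
        case 1 then show ?thesis using W_step(1) FV by (simp add: \<sigma>_def fr_nil)
      next
        case (2 a) then show ?thesis using dh by (simp add: \<sigma>_def)
      next
        case (3 a b rest)
        show ?thesis
        proof (cases "a = x \<and> b \<in> F - {x}")
          case True
          then have "legal_strategy V (insert x M) (insert b B0) (S b)" using S by blast
          moreover have "free_vertices V (insert x M) (insert b B0) rest \<noteq> {}"
            using ne 3 True by (simp add: fr_cons2)
          ultimately have "S b rest \<in> free_vertices V M B0 h"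
            using 3 True unfolding legal_strategy_def by (simp add: fr_cons2)
          then show ?thesis using 3 True by (simp add: \<sigma>_def)
        next
          case False then show ?thesis using 3 dh by (auto simp: \<sigma>_def)
        qed
      qed
    qed
    have win: "\<exists>n. maker_won E M (play V E M B0 \<sigma> \<tau> n)" if leg\<tau>: "legal_strategy V M B0 \<tau>" for \<tau>
    proof (cases "maker_won E M []")
      case True then show ?thesis by (intro exI[of _ 0]) simp
    next
      case nw0: False
      have ne0: "free_vertices V M B0 [] \<noteq> {}" using W_step(1) FV by (auto simp: fr_nil)
      have p1: "play V E M B0 \<sigma> \<tau> (Suc 0) = [x]" using nw0 ne0 by (simp add: \<sigma>_def)
      show ?thesis
      proof (cases "maker_won E M [x]")
        case True then show ?thesis using p1 by metis
      next
        case nw1: False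
        have fr1: "free_vertices V M B0 [x] = F - {x}" using FV by (auto simp: free_vertices_def)
        define y where "y = \<tau> [x]"
        have y: "y \<in> F - {x}" using leg\<tau> W_step(2) fr1 unfolding legal_strategy_def y_def by metis
        have p2: "play V E M B0 \<sigma> \<tau> (Suc (Suc 0)) = [x, y]"
          using p1 nw1 W_step(2) fr1 by (simp add: y_def)
        define \<tau>' where "\<tau>' = (\<lambda>h. \<tau> (x # y # h))"
        have leg\<tau>': "legal_strategy V (insert x M) (insert y B0) \<tau>'"
          using leg\<tau> unfolding legal_strategy_def \<tau>'_def by (metis fr_cons2)
        from S[OF y] leg\<tau>' obtain n where
          n: "maker_won E (insert x M) (play V E (insert x M) (insert y B0) (S y) \<tau>' n)" by blast
        have shift: "play V E M B0 \<sigma> \<tau> (Suc (Suc k)) = x # y # play V E (insert x M) (insert y B0) (S y) \<tau>' k" for k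
        proof (induction k)
          case 0 then show ?case using p2 by simp
        next
          case (Suc k)
          let ?h = "play V E (insert x M) (insert y B0) (S y) \<tau>' k"
          have A: "play V E M B0 \<sigma> \<tau> (Suc (Suc (Suc k))) = (let h = x # y # ?h in
              if maker_won E M h \<or> free_vertices V M B0 h = {} then h
              else h @ [if even (length h) then \<sigma> h else \<tau> h])"
            by (subst play.simps(2)) (simp only: Suc.IH)
          have B: "play V E (insert x M) (insert y B0) (S y) \<tau>' (Suc k) = (let h = ?h in
              if maker_won E (insert x M) h \<or> free_vertices V (insert x M) (insert y B0) h = {} then h
              else h @ [if even (length h) then S y h else \<tau>' h])"
            by (rule play.simps(2))
          have e1: "maker_won E M (x#y#?h) = maker_won E (insert x M) ?h" by (simp add: mwon mv_cons2)
          have e2: "free_vertices V M B0 (x#y#?h) = free_vertices V (insert x M) (insert y B0) ?h"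
            by (rule fr_cons2)
          have e3: "\<sigma> (x#y#?h) = S y ?h" using y by (simp add: \<sigma>_def)
          have e4: "\<tau> (x#y#?h) = \<tau>' ?h" by (simp add: \<tau>'_def)
          show ?case unfolding A B Let_def e1 e2 e3 e4 by simp
        qed
        have "maker_won E M (play V E M B0 \<sigma> \<tau> (Suc (Suc n)))"
          using n unfolding shift by (simp add: mwon mv_cons2)
        then show ?thesis by blast
      qed
    qed
    show "maker_can_win_from V E M B0" unfolding maker_can_win_from_def using leg win by blast
  qed
qed

lemma win_imp_mw:
  assumes "maker_can_win_from V E M0 B0"
  shows "mw E M0 (V - M0 - B0)"
proof (rule ccontr)
  assume nmw: "\<not> mw E M0 (V - M0 - B0)"
  from assms obtain \<sigma> where leg\<sigma>: "legal_strategy V M0 B0 \<sigma>" and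
    win\<sigma>: "\<forall>\<tau>. legal_strategy V M0 B0 \<tau> \<longrightarrow> (\<exists>n. maker_won E M0 (play V E M0 B0 \<sigma> \<tau> n))"
    unfolding maker_can_win_from_def by blast
  define mv where "mv = maker_vertices M0"
  define fr where "fr = free_vertices V M0 B0"
  define \<tau> where "\<tau> h = (if \<exists>y\<in>fr h. \<not> mw E (mv h) (fr h - {y})
      then SOME y. y \<in> fr h \<and> \<not> mw E (mv h) (fr h - {y}) else SOME y. y \<in> fr h)" for h
  have \<tau>1: "\<tau> h \<in> fr h \<and> \<not> mw E (mv h) (fr h - {\<tau> h})"
    if "\<exists>y\<in>fr h. \<not> mw E (mv h) (fr h - {y})" for h
  proof -
    from that have ex: "\<exists>y. y \<in> fr h \<and> \<not> mw E (mv h) (fr h - {y})" by blast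
    have "\<tau> h = (SOME y. y \<in> fr h \<and> \<not> mw E (mv h) (fr h - {y}))" using that unfolding \<tau>_def by simp
    with someI_ex[OF ex] show ?thesis by simp
  qed
  have leg\<tau>: "legal_strategy V M0 B0 \<tau>"
    unfolding legal_strategy_def fr_def[symmetric]
  proof (intro allI impI)
    fix h assume ne: "fr h \<noteq> {}"
    show "\<tau> h \<in> fr h"
    proof (cases "\<exists>y\<in>fr h. \<not> mw E (mv h) (fr h - {y})")
      case True then show ?thesis using \<tau>1 by blast
    next
      case False then show ?thesis using ne by (simp add: \<tau>_def some_in_eq)
    qed
  qed
  define Inv where "Inv h \<longleftrightarrow> (even (length h) \<longrightarrow> \<not> mw E (mv h) (fr h)) \<and>
     (odd (length h) \<longrightarrow> \<not> won E (mv h) \<and> (fr h = {} \<or> (\<exists>y\<in>fr h. \<not> mw E (mv h) (fr h - {y}))))" for h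
  have inv: "Inv (play V E M0 B0 \<sigma> \<tau> n)" for n
  proof (induction n)
    case 0 show ?case using nmw by (simp add: Inv_def mv_def fr_def mv_nil fr_nil)
  next
    case (Suc n)
    let ?h = "play V E M0 B0 \<sigma> \<tau> n"
    show ?case
    proof (cases "maker_won E M0 ?h \<or> fr ?h = {}")
      case True
      then have "play V E M0 B0 \<sigma> \<tau> (Suc n) = ?h" by (auto simp: Let_def fr_def)
      then show ?thesis using Suc.IH by simp
    next
      case False
      then have nw: "\<not> maker_won E M0 ?h" and ne: "fr ?h \<noteq> {}" by auto
      show ?thesis
      proof (cases "even (length ?h)")
        case True
        have p: "play V E M0 B0 \<sigma> \<tau> (Suc n) = ?h @ [\<sigma> ?h]" using nw ne True by (simp add: Let_def fr_def)
        have xin: "\<sigma> ?h \<in> fr ?h" using leg\<sigma> ne unfolding legal_strategy_def fr_def by blast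
        have nm: "\<not> mw E (mv ?h) (fr ?h)" using Suc.IH True unfolding Inv_def by blast
        have mvs: "mv (?h @ [\<sigma> ?h]) = insert (\<sigma> ?h) (mv ?h)" using True by (simp add: mv_def mv_snoc)
        have frs: "fr (?h @ [\<sigma> ?h]) = fr ?h - {\<sigma> ?h}" by (simp add: fr_def fr_snoc)
        show ?thesis unfolding p Inv_def mvs frs Diff2
          using not_mw2[OF nm xin] not_mw3[OF nm xin] True by auto
      next
        case False
        have p: "play V E M0 B0 \<sigma> \<tau> (Suc n) = ?h @ [\<tau> ?h]" using nw ne False by (simp add: Let_def fr_def)
        have ex: "\<exists>y\<in>fr ?h. \<not> mw E (mv ?h) (fr ?h - {y})" using Suc.IH False ne unfolding Inv_def by blast
        have mvs: "mv (?h @ [\<tau> ?h]) = mv ?h" using False by (simp add: mv_def mv_snoc)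
        have frs: "fr (?h @ [\<tau> ?h]) = fr ?h - {\<tau> ?h}" by (simp add: fr_def fr_snoc)
        show ?thesis unfolding p Inv_def mvs frs using \<tau>1[OF ex] False by simp
      qed
    qed
  qed
  have "\<not> maker_won E M0 (play V E M0 B0 \<sigma> \<tau> n)" for n
  proof -
    have "\<not> won E (mv (play V E M0 B0 \<sigma> \<tau> n))"
      using inv[of n] unfolding Inv_def by (metis not_mw1)
    then show ?thesis by (simp add: mwon mv_def)
  qed
  with win\<sigma> leg\<tau> show False by blast
qed

lemma can_win_iff: "maker_can_win_from V E M0 B0 \<longleftrightarrow> mw E M0 (V - M0 - B0)"
  using win_imp_mw mw_imp_win by blast



theorem theorem5:
  fixes V V1 V2 :: "'a set" and E E1 E2 :: "'a set set" and v :: 'a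
  assumes "\<forall>e\<in>E. e \<subseteq> V"
    and "\<forall>e\<in>E1. e \<subseteq> V1"
    and "\<forall>e\<in>E2. e \<subseteq> V2"
    and "V1 \<union> V2 = V"
    and "V1 \<inter> V2 = {v}"
    and "E = E1 \<union> E2"
  shows "maker_can_win V E \<longleftrightarrow>
           (maker_can_win V1 E1 \<or> maker_can_win V2 E2 \<or>
            (maker_can_win_from V1 E1 {v} {} \<and> maker_can_win_from V2 E2 {v} {}))"
proof -
  note E1 = assms(2) and E2 = assms(3) and U = assms(4) and I = assms(5) and EE = assms(6)
  have c0: "maker_can_win V E \<longleftrightarrow> mw E {} V" unfolding maker_can_win_def can_win_iff by simp
  have c1: "maker_can_win V1 E1 \<longleftrightarrow> mw E1 {} V1" unfolding maker_can_win_def can_win_iff by simp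
  have c2: "maker_can_win V2 E2 \<longleftrightarrow> mw E2 {} V2" unfolding maker_can_win_def can_win_iff by simp
  have c3: "maker_can_win_from V1 E1 {v} {} \<longleftrightarrow> mw E1 {v} (V1 - {v})" unfolding can_win_iff by simp
  have c4: "maker_can_win_from V2 E2 {v} {} \<longleftrightarrow> mw E2 {v} (V2 - {v})" unfolding can_win_iff by simp
  have vV1: "v \<in> V1" and vV2: "v \<in> V2" using I by auto
  have sub1: "E1 \<subseteq> E" and sub2: "E2 \<subseteq> E" using EE by auto
  have fwd: "mw E1 {} V1 \<or> mw E2 {} V2 \<or> (mw E1 {v} (V1 - {v}) \<and> mw E2 {v} (V2 - {v}))"
    if h: "mw E {} V"
  proof -
    have a: "mw E1 ({} \<inter> V1 \<union> {v}) (V \<inter> V1 - {v}) \<or> mw E2 ({} \<inter> V2) (V \<inter> V2)"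
      using mw_split_aux[OF E1 E2 I EE h] U by blast
    have b: "mw E2 ({} \<inter> V2 \<union> {v}) (V \<inter> V2 - {v}) \<or> mw E1 ({} \<inter> V1) (V \<inter> V1)"
      using mw_split_aux[OF E2 E1 _ _ h, of v] U I EE by (simp add: Int_commute Un_commute)
    have e1: "V \<inter> V1 = V1" "V \<inter> V2 = V2" using U by auto
    show ?thesis using a b unfolding e1 by auto
  qed
  have bwd: "mw E {} V"
    if h: "mw E1 {} V1 \<or> mw E2 {} V2 \<or> (mw E1 {v} (V1 - {v}) \<and> mw E2 {v} (V2 - {v}))"
  proof -
    { assume "mw E1 {} V1"
      then have ?thesis by (rule mw_lift) (use sub1 U in auto) }
    moreover
    { assume "mw E2 {} V2"
      then have ?thesis by (rule mw_lift) (use sub2 U in auto) }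
    moreover
    { assume h1: "mw E1 {v} (V1 - {v})" and h2: "mw E2 {v} (V2 - {v})"
      have vV: "v \<in> V" using U vV1 by auto
      have ?thesis
      proof (cases "V - {v} = {}")
        case True
        have "won E1 ({v} \<union> (V1 - {v}))" using h1 by (rule mw_won_all)
        then have "won E (insert v {})" by (rule won_mono) (use sub1 True U in auto)
        then show ?thesis by (rule mw.W_fin[OF vV])
      next
        case False
        show ?thesis
        proof (rule mw.W_step[OF vV False], rule ballI)
          fix y assume y: "y \<in> V - {v}"
          show "mw E (insert v {}) (V - {v, y})"
          proof (cases "y \<in> V1")
            case True
            then have "y \<notin> V2" using y I by auto
            show ?thesis using h2 by (rule mw_lift) (use sub2 U \<open>y \<notin> V2\<close> in auto)
          next
            case False
            show ?thesis using h1 by (rule mw_lift) (use sub1 U False in auto)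
          qed
        qed
      qed }
    ultimately show ?thesis using h by blast
  qed
  show ?thesis unfolding c0 c1 c2 c3 c4 using fwd bwd by blast
qed


end
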